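(* Let $H$ be an nb-critical graph, $vw\in E(H)$, and $H'=H-vw$. Suppose vertices $s,t$ of a graph $J$ are linked in $J$ via $H$, i.e. $J$ contains a subgraph isomorphic to $H'$ under an isomorphism mapping $v\mapsto s$ and $w\mapsto t$. Then for every near-bipartite coloring $I,F$ of $J$, either $\{s,t\}\subseteq I$, or $\{s,t\}\subseteq F$ and $J[F]$ contains a path from $s$ to $t$.
   Context: A near-bipartite coloring (nb-coloring) of a (multi)graph is a partition of its vertex set into $I,F$ with $I$ independent and the subgraph induced by $F$ a forest (no circuits). A graph is nb-critical if it has no nb-coloring but every proper subgraph has one. *)

theory Defs
  imports Main
begin

text \<open>A (finite) multigraph with vertex set V, edge set E and an endpoint map
  ends; each edge has one (loop) or two endpoints. Parallel edges and loops allowed.\<close>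
definition multigraph :: "'v set \<Rightarrow> 'e set \<Rightarrow> ('e \<Rightarrow> 'v set) \<Rightarrow> bool" where
  "multigraph V E ends \<longleftrightarrow> finite V \<and> finite E \<and>
     (\<forall>e\<in>E. ends e \<subseteq> V \<and> ends e \<noteq> {} \<and> card (ends e) \<le> 2)"

definition induced_edges :: "'e set \<Rightarrow> ('e \<Rightarrow> 'v set) \<Rightarrow> 'v set \<Rightarrow> 'e set" where
  "induced_edges E ends S = {e \<in> E. ends e \<subseteq> S}"

text \<open>A circuit: distinct edges es_0..es_(k-1), k \<ge> 1, and distinct vertices
  xs_0..xs_(k-1) with es_i joining xs_i and xs_(i+1 mod k).
  (Loops are circuits of length 1, pairs of parallel edges circuits of length 2.)\<close>
definition has_circuit :: "'e set \<Rightarrow> ('e \<Rightarrow> 'v set) \<Rightarrow> bool" where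
  "has_circuit E ends \<longleftrightarrow> (\<exists>es xs. es \<noteq> [] \<and> distinct es \<and> set es \<subseteq> E \<and>
      length xs = length es \<and> distinct xs \<and>
      (\<forall>i < length es. ends (es ! i) = {xs ! i, xs ! ((i + 1) mod length es)}))"

definition nb_coloring :: "'v set \<Rightarrow> 'e set \<Rightarrow> ('e \<Rightarrow> 'v set) \<Rightarrow> 'v set \<Rightarrow> 'v set \<Rightarrow> bool" where
  "nb_coloring V E ends I F \<longleftrightarrow> I \<union> F = V \<and> I \<inter> F = {} \<and>
     (\<forall>e\<in>E. \<not> ends e \<subseteq> I) \<and>
     \<not> has_circuit (induced_edges E ends F) ends"

definition nb_colorable :: "'v set \<Rightarrow> 'e set \<Rightarrow> ('e \<Rightarrow> 'v set) \<Rightarrow> bool" where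
  "nb_colorable V E ends \<longleftrightarrow> (\<exists>I F. nb_coloring V E ends I F)"

definition subgraph :: "'v set \<Rightarrow> 'e set \<Rightarrow> 'v set \<Rightarrow> 'e set \<Rightarrow> ('e \<Rightarrow> 'v set) \<Rightarrow> bool" where
  "subgraph V' E' V E ends \<longleftrightarrow> V' \<subseteq> V \<and> E' \<subseteq> E \<and> (\<forall>e\<in>E'. ends e \<subseteq> V')"

definition nb_critical :: "'v set \<Rightarrow> 'e set \<Rightarrow> ('e \<Rightarrow> 'v set) \<Rightarrow> bool" where
  "nb_critical V E ends \<longleftrightarrow> multigraph V E ends \<and> \<not> nb_colorable V E ends \<and>
     (\<forall>V' E'. subgraph V' E' V E ends \<and> (V', E') \<noteq> (V, E) \<longrightarrow> nb_colorable V' E' ends)"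

definition has_path_in :: "'e set \<Rightarrow> ('e \<Rightarrow> 'v set) \<Rightarrow> 'v set \<Rightarrow> 'v \<Rightarrow> 'v \<Rightarrow> bool" where
  "has_path_in E ends S s t \<longleftrightarrow> (\<exists>xs. xs \<noteq> [] \<and> hd xs = s \<and> last xs = t \<and> distinct xs \<and>
      set xs \<subseteq> S \<and>
      (\<forall>i. Suc i < length xs \<longrightarrow>
          (\<exists>e \<in> induced_edges E ends S. ends e = {xs ! i, xs ! Suc i})))"

definition contains_copy ::
  "'v set \<Rightarrow> 'e set \<Rightarrow> ('e \<Rightarrow> 'v set) \<Rightarrow> 'u set \<Rightarrow> 'f set \<Rightarrow> ('f \<Rightarrow> 'u set) \<Rightarrow>
   'v \<Rightarrow> 'v \<Rightarrow> 'u \<Rightarrow> 'u \<Rightarrow> bool" where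
  "contains_copy VH EH endsH VJ EJ endsJ v w s t \<longleftrightarrow>
     (\<exists>\<phi> \<psi>. inj_on \<phi> VH \<and> \<phi> ` VH \<subseteq> VJ \<and> inj_on \<psi> EH \<and> \<psi> ` EH \<subseteq> EJ \<and>
        (\<forall>e\<in>EH. endsJ (\<psi> e) = \<phi> ` endsH e) \<and> \<phi> v = s \<and> \<phi> w = t)"

end

theory Submission
  imports Defs
begin

lemma path_sym:
  assumes "has_path_in E ends S a b"
  shows "has_path_in E ends S b a"
proof -
  obtain xs where xs: "xs \<noteq> []" "hd xs = a" "last xs = b" "distinct xs" "set xs \<subseteq> S"
    "\<forall>i. Suc i < length xs \<longrightarrow> (\<exists>e \<in> induced_edges E ends S. ends e = {xs ! i, xs ! Suc i})"
    using assms unfolding has_path_in_def by blast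
  show ?thesis unfolding has_path_in_def
  proof (intro exI[of _ "rev xs"] conjI allI impI)
    show "rev xs \<noteq> []" "hd (rev xs) = b" "last (rev xs) = a" "distinct (rev xs)" "set (rev xs) \<subseteq> S"
      using xs by (auto simp: hd_rev last_rev)
    fix i assume i: "Suc i < length (rev xs)"
    let ?n = "length xs"
    have "Suc (?n - 2 - i) < ?n" using i by simp
    then obtain e where e: "e \<in> induced_edges E ends S" "ends e = {xs ! (?n - 2 - i), xs ! Suc (?n - 2 - i)}"
      using xs(6) by blast
    have "rev xs ! i = xs ! Suc (?n - 2 - i)" using i by (simp add: rev_nth Suc_diff_Suc)
    moreover have "rev xs ! Suc i = xs ! (?n - 2 - i)" using i by (simp add: rev_nth)
    ultimately show "\<exists>e \<in> induced_edges E ends S. ends e = {rev xs ! i, rev xs ! Suc i}"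
      using e by (metis insert_commute)
  qed
qed

lemma rot_edge:
  assumes "distinct es" "length xs = length es"
    "\<forall>i<length es. ends (es!i) = {xs!i, xs!((i+1) mod length es)}"
    "j < length es" "Suc i < length es"
  shows "ends (es ! ((Suc j + i) mod length es)) = {rotate (Suc j) xs ! i, rotate (Suc j) xs ! Suc i}
     \<and> es ! ((Suc j + i) mod length es) \<noteq> es ! j"
proof -
  let ?k = "length es"
  have k: "?k > 0" using assms(5) by linarith
  have m: "(Suc j + i) mod ?k < ?k" using k by simp
  have r1: "rotate (Suc j) xs ! i = xs ! ((Suc j + i) mod ?k)"
    using assms by (subst nth_rotate) auto
  have r2: "rotate (Suc j) xs ! Suc i = xs ! (((Suc j + i) mod ?k + 1) mod ?k)"
    using assms by (subst nth_rotate) (auto simp: mod_Suc_eq)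
  have ne: "(Suc j + i) mod ?k \<noteq> j"
  proof (cases "Suc j + i < ?k")
    case True then show ?thesis by simp
  next
    case False
    then have "(Suc j + i) mod ?k = Suc j + i - ?k" using assms
      by (simp add: le_mod_geq mod_less)
    then show ?thesis using assms False by simp
  qed
  have "es ! ((Suc j + i) mod ?k) \<noteq> es ! j"
    using assms(1,4) m ne by (simp add: nth_eq_iff_index_eq)
  then show ?thesis using assms(3) m r1 r2 by simp
qed

theorem lemma3p2:
  fixes VH :: "'v set" and EH :: "'e set" and endsH :: "'e \<Rightarrow> 'v set"
    and VJ :: "'u set" and EJ :: "'f set" and endsJ :: "'f \<Rightarrow> 'u set"
  assumes crit: "nb_critical VH EH endsH"
    and vw: "vw \<in> EH" "endsH vw = {v, w}"
    and J: "multigraph VJ EJ endsJ"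
    and linked: "contains_copy VH (EH - {vw}) endsH VJ EJ endsJ v w s t"
    and col: "nb_coloring VJ EJ endsJ I F"
  shows "{s, t} \<subseteq> I \<or> ({s, t} \<subseteq> F \<and> has_path_in EJ endsJ F s t)"
proof -
  obtain \<phi> \<psi> where ph: "inj_on \<phi> VH" "\<phi> ` VH \<subseteq> VJ" "inj_on \<psi> (EH - {vw})"
    "\<psi> ` (EH - {vw}) \<subseteq> EJ" "\<forall>e\<in>EH - {vw}. endsJ (\<psi> e) = \<phi> ` endsH e" "\<phi> v = s" "\<phi> w = t"
    using linked unfolding contains_copy_def by blast
  have colJ: "I \<union> F = VJ" "I \<inter> F = {}" "\<forall>e\<in>EJ. \<not> endsJ e \<subseteq> I"
    "\<not> has_circuit (induced_edges EJ endsJ F) endsJ"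
    using col unfolding nb_coloring_def by auto
  have mg: "multigraph VH EH endsH" and nc: "\<not> nb_colorable VH EH endsH"
    using crit unfolding nb_critical_def by auto
  have endsV: "\<And>e. e \<in> EH \<Longrightarrow> endsH e \<subseteq> VH" using mg unfolding multigraph_def by auto
  define IH where "IH = {x\<in>VH. \<phi> x \<in> I}"
  define FH where "FH = {x\<in>VH. \<phi> x \<in> F}"
  have part: "IH \<union> FH = VH" "IH \<inter> FH = {}"
    using colJ(1,2) ph(2) unfolding IH_def FH_def by auto
  have A: "\<forall>e\<in>EH-{vw}. \<not> endsH e \<subseteq> IH"
  proof
    fix e assume e: "e \<in> EH - {vw}"
    have "\<psi> e \<in> EJ" using e ph(4) by auto
    then have "\<not> endsJ (\<psi> e) \<subseteq> I" using colJ(3) by blast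
    then show "\<not> endsH e \<subseteq> IH" using ph(5) e unfolding IH_def by auto
  qed
  have B: "\<not> has_circuit (induced_edges (EH-{vw}) endsH FH) endsH"
  proof
    assume "has_circuit (induced_edges (EH-{vw}) endsH FH) endsH"
    then obtain es xs where c: "es \<noteq> []" "distinct es" "set es \<subseteq> induced_edges (EH-{vw}) endsH FH"
      "length xs = length es" "distinct xs"
      "\<forall>i < length es. endsH (es ! i) = {xs ! i, xs ! ((i + 1) mod length es)}"
      unfolding has_circuit_def by blast
    have esE: "set es \<subseteq> EH - {vw}" using c(3) unfolding induced_edges_def by auto
    have xsF: "set xs \<subseteq> FH"
    proof
      fix x assume "x \<in> set xs"
      then obtain i where i: "i < length xs" "x = xs ! i" by (auto simp: in_set_conv_nth)
      have "es ! i \<in> set es" using i c(4) by simp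
      then have "endsH (es ! i) \<subseteq> FH" using c(3) unfolding induced_edges_def by auto
      then show "x \<in> FH" using c(6) i c(4) by auto
    qed
    have xsV: "set xs \<subseteq> VH" using xsF unfolding FH_def by auto
    have "has_circuit (induced_edges EJ endsJ F) endsJ"
      unfolding has_circuit_def
    proof (intro exI[of _ "map \<psi> es"] exI[of _ "map \<phi> xs"] conjI allI impI)
      show "map \<psi> es \<noteq> []" using c(1) by simp
      show "distinct (map \<psi> es)" using c(2) esE ph(3) by (simp add: distinct_map inj_on_subset)
      show "distinct (map \<phi> xs)" using c(5) xsV ph(1) by (simp add: distinct_map inj_on_subset)
      show "length (map \<phi> xs) = length (map \<psi> es)" using c(4) by simp
      show "set (map \<psi> es) \<subseteq> induced_edges EJ endsJ F"
      proof
        fix y assume "y \<in> set (map \<psi> es)"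
        then obtain e where e: "e \<in> set es" "y = \<psi> e" by auto
        have "endsH e \<subseteq> FH" using e c(3) unfolding induced_edges_def by auto
        moreover have "endsJ y = \<phi> ` endsH e" using e esE ph(5) by auto
        ultimately have "endsJ y \<subseteq> F" unfolding FH_def by auto
        moreover have "y \<in> EJ" using e esE ph(4) by auto
        ultimately show "y \<in> induced_edges EJ endsJ F" unfolding induced_edges_def by auto
      qed
      fix i assume i: "i < length (map \<psi> es)"
      have "es ! i \<in> set es" using i by simp
      then have "endsJ (\<psi> (es ! i)) = \<phi> ` endsH (es ! i)" using esE ph(5) by auto
      moreover have "Suc i mod length es < length xs" using i c(4) by (metis length_map mod_less_divisor gr_implies_not_zero not_gr_zero)
      ultimately show "endsJ (map \<psi> es ! i) = {map \<phi> xs ! i, map \<phi> xs ! ((i + 1) mod length (map \<psi> es))}"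
        using i c(4,6) by (simp add: nth_map del: map_map)
    qed
    then show False using colJ(4) by simp
  qed
  have "\<not> nb_coloring VH EH endsH IH FH" using nc unfolding nb_colorable_def by blast
  then have "(\<exists>e\<in>EH. endsH e \<subseteq> IH) \<or> has_circuit (induced_edges EH endsH FH) endsH"
    using part unfolding nb_coloring_def by blast
  then show ?thesis
  proof
    assume "\<exists>e\<in>EH. endsH e \<subseteq> IH"
    then have "endsH vw \<subseteq> IH" using A by blast
    then have "{s,t} \<subseteq> I" using vw(2) ph(6,7) unfolding IH_def by auto
    then show ?thesis by simp
  next
    assume "has_circuit (induced_edges EH endsH FH) endsH"
    then obtain es xs where c: "es \<noteq> []" "distinct es" "set es \<subseteq> induced_edges EH endsH FH"
      "length xs = length es" "distinct xs"
      "\<forall>i < length es. endsH (es ! i) = {xs ! i, xs ! ((i + 1) mod length es)}"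
      unfolding has_circuit_def by blast
    have esE: "set es \<subseteq> EH" using c(3) unfolding induced_edges_def by auto
    have "vw \<in> set es"
    proof (rule ccontr)
      assume "vw \<notin> set es"
      then have "has_circuit (induced_edges (EH-{vw}) endsH FH) endsH"
        using c unfolding has_circuit_def induced_edges_def by blast
      then show False using B by simp
    qed
    then obtain j where j: "j < length es" "es ! j = vw" by (auto simp: in_set_conv_nth)
    have vwF: "endsH vw \<subseteq> FH" using j c(3) unfolding induced_edges_def by force
    then have stF: "{s,t} \<subseteq> F" using vw(2) ph(6,7) unfolding FH_def by auto
    have xsF: "set xs \<subseteq> FH"
    proof
      fix x assume "x \<in> set xs"
      then obtain i where i: "i < length xs" "x = xs ! i" by (auto simp: in_set_conv_nth)
      have "es ! i \<in> set es" using i c(4) by simp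
      then have "endsH (es ! i) \<subseteq> FH" using c(3) unfolding induced_edges_def by auto
      then show "x \<in> FH" using c(6) i c(4) by auto
    qed
    have xsV: "set xs \<subseteq> VH" using xsF unfolding FH_def by auto
    define ys where "ys = rotate (Suc j) xs"
    define zs where "zs = map \<phi> ys"
    have lys: "length ys = length es" using c(4) unfolding ys_def by simp
    have ys0: "ys ! 0 = xs ! (Suc j mod length es)"
      unfolding ys_def using c(1,4) by (subst nth_rotate) (auto simp del: rotate_Suc)
    have ysl: "ys ! (length es - 1) = xs ! j"
    proof -
      have "ys ! (length es - 1) = xs ! ((Suc j + (length es - 1)) mod length es)"
        unfolding ys_def using c(1,4) by (subst nth_rotate) (auto simp del: rotate_Suc)
      also have "(Suc j + (length es - 1)) mod length es = j"
      proof -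
        have "Suc j + (length es - 1) = j + length es" using c(1) by (cases es) auto
        then show ?thesis using j(1) by simp
      qed
      finally show ?thesis .
    qed
    have endsvw: "{hd zs, last zs} = {s, t}"
    proof -
      have "hd zs = \<phi> (xs ! (Suc j mod length es))"
      proof -
        have ne: "ys \<noteq> []" using c(1) lys by auto
        then show ?thesis using ys0 unfolding zs_def by (simp add: hd_map hd_conv_nth)
      qed
      moreover have "last zs = \<phi> (xs ! j)"
      proof -
        have ne: "ys \<noteq> []" using c(1) lys by auto
        then have "last ys = xs ! j" using ysl lys by (simp add: last_conv_nth)
        then show ?thesis using ne unfolding zs_def by (simp add: last_map)
      qed
      ultimately have "{hd zs, last zs} = \<phi> ` {xs ! j, xs ! (Suc j mod length es)}" by auto
      moreover have "{xs ! j, xs ! (Suc j mod length es)} = {v, w}"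
        using c(6) j vw(2) by auto
      ultimately have "{hd zs, last zs} = \<phi> ` {v, w}" by simp
      then show ?thesis using ph(6,7) by simp
    qed
    have P: "has_path_in EJ endsJ F (hd zs) (last zs)"
      unfolding has_path_in_def
    proof (intro exI[of _ zs] conjI allI impI)
      show "zs \<noteq> []" using c(1) lys unfolding zs_def by auto
      show "hd zs = hd zs" "last zs = last zs" by simp_all
      show "distinct zs" using c(5) xsV ph(1) unfolding zs_def ys_def
        by (simp add: distinct_map inj_on_subset)
      show "set zs \<subseteq> F" using xsF unfolding zs_def ys_def FH_def by auto
      fix i assume i: "Suc i < length zs"
      let ?e = "es ! ((Suc j + i) mod length es)"
      have i': "Suc i < length es" using i lys unfolding zs_def by simp
      have re: "endsH ?e = {ys ! i, ys ! Suc i} \<and> ?e \<noteq> es ! j"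
        using rot_edge[OF c(2) c(4) c(6) j(1) i'] unfolding ys_def .
      have eset: "?e \<in> set es" using c(1) by simp
      then have eH: "?e \<in> EH - {vw}" using esE re j(2) by auto
      have "endsH ?e \<subseteq> FH" using eset c(3) unfolding induced_edges_def by auto
      then have "endsJ (\<psi> ?e) \<subseteq> F" using eH ph(5) unfolding FH_def by auto
      moreover have "\<psi> ?e \<in> EJ" using eH ph(4) by auto
      moreover have "endsJ (\<psi> ?e) = {zs ! i, zs ! Suc i}"
        using eH ph(5) re i unfolding zs_def by auto
      ultimately show "\<exists>e \<in> induced_edges EJ endsJ F. endsJ e = {zs ! i, zs ! Suc i}"
        unfolding induced_edges_def by blast
    qed
    have "has_path_in EJ endsJ F s t"
    proof (cases "hd zs = s")
      case True
      then have "last zs = t \<or> s = t" using endsvw by (auto simp: doubleton_eq_iff)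
      then show ?thesis
      proof
        assume "last zs = t" then show ?thesis using P True by simp
      next
        assume st: "s = t"
        show ?thesis unfolding has_path_in_def st
          by (intro exI[of _ "[t]"]) (use stF st in auto)
      qed
    next
      case False
      then have "hd zs = t" "last zs = s" using endsvw by (auto simp: doubleton_eq_iff)
      then show ?thesis using path_sym[OF P] by simp
    qed
    then show ?thesis using stF by simp
  qed
qed

end
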